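(* Let $R$ be a Reinhardt domain in $\Delta^r$ and $f$ a smooth $T$-invariant function on $R$. Then $f$ is strictly plurisubharmonic if and only if $\tilde f$ belongs to $LogConv^{\infty,+}(\mathcal D)^{(\mathbb Z_2)^r}$.
   Context: $\Delta^r$ is the unit polydisc in $\mathbb C^r$ and $T=(S^1)^r$ acts on it by coordinatewise rotations. A Reinhardt domain $R\subset\Delta^r$ is a $T$-invariant open subset (not necessarily connected). Set $\mathcal D=\{(a_1,\dots,a_r)\in\mathbb R^r:(\tanh a_1,\dots,\tanh a_r)\in R\}$ and, for $T$-invariant $f$ on $R$, $\tilde f(a_1,\dots,a_r)=f(\tanh a_1,\dots,\tanh a_r)$ (which is even in each variable). $LogConv^{\infty,+}(\mathcal D)^{(\mathbb Z_2)^r}$ is the class of smooth functions $\tilde f$ on $\mathcal D$, even in each variable, such that at every point $H=(a_1,\dots,a_r)\in\mathcal D$ the symmetric matrix with entries $2\coth(2a_j)\frac{\partial\tilde f}{\partial a_j}(H)\delta_{jl}+\frac{\partial^2\tilde f}{\partial a_j\partial a_l}(H)$ is strictly positive definite (where for $a_j=0$ the term $2\coth(2a_j)\frac{\partial\tilde f}{\partial a_j}$ is understood as its continuous extension $\frac{\partial^2\tilde f}{\partial a_j^2}$). *)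

theory Defs
  imports "HOL-Analysis.Analysis"
begin

definition dderiv :: "('a::real_normed_vector \<Rightarrow> 'b::real_normed_vector) \<Rightarrow> 'a \<Rightarrow> 'a \<Rightarrow> 'b" where
  "dderiv f v = (\<lambda>x. frechet_derivative f (at x) v)"

fun iter_dderiv :: "('a::real_normed_vector \<Rightarrow> 'b::real_normed_vector) \<Rightarrow> 'a list \<Rightarrow> 'a \<Rightarrow> 'b" where
  "iter_dderiv f [] = f"
| "iter_dderiv f (v # vs) = dderiv (iter_dderiv f vs) v"

definition smooth_on :: "'a::real_normed_vector set \<Rightarrow> ('a \<Rightarrow> 'b::real_normed_vector) \<Rightarrow> bool" where
  "smooth_on S f \<longleftrightarrow> open S \<and> (\<forall>vs. \<forall>x\<in>S. iter_dderiv f vs differentiable (at x))"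

definition wirt_z :: "'r::finite \<Rightarrow> (complex^'r \<Rightarrow> complex) \<Rightarrow> complex^'r \<Rightarrow> complex" where
  "wirt_z j g = (\<lambda>z. (dderiv g (axis j 1) z - \<i> * dderiv g (axis j \<i>) z) / 2)"

definition wirt_zbar :: "'r::finite \<Rightarrow> (complex^'r \<Rightarrow> complex) \<Rightarrow> complex^'r \<Rightarrow> complex" where
  "wirt_zbar j g = (\<lambda>z. (dderiv g (axis j 1) z + \<i> * dderiv g (axis j \<i>) z) / 2)"

definition levi :: "(complex^'r::finite \<Rightarrow> real) \<Rightarrow> 'r \<Rightarrow> 'r \<Rightarrow> complex^'r \<Rightarrow> complex" where
  "levi f j l = wirt_z j (wirt_zbar l (\<lambda>z. complex_of_real (f z)))"

definition strictly_psh_on :: "(complex^'r::finite) set \<Rightarrow> (complex^'r \<Rightarrow> real) \<Rightarrow> bool" where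
  "strictly_psh_on U f \<longleftrightarrow>
     (\<forall>z\<in>U. \<forall>w::complex^'r. w \<noteq> 0 \<longrightarrow>
        Re (\<Sum>j\<in>UNIV. \<Sum>l\<in>UNIV. levi f j l z * w$j * cnj (w$l)) > 0)"

definition unit_polydisc :: "(complex^'r::finite) set" where
  "unit_polydisc = {z. \<forall>j. norm (z$j) < 1}"

definition torus_act :: "('r::finite \<Rightarrow> real) \<Rightarrow> complex^'r \<Rightarrow> complex^'r" where
  "torus_act \<theta> z = (\<chi> j. cis (\<theta> j) * z$j)"

definition T_invariant_set :: "(complex^'r::finite) set \<Rightarrow> bool" where
  "T_invariant_set R \<longleftrightarrow> (\<forall>\<theta> z. z \<in> R \<longrightarrow> torus_act \<theta> z \<in> R)"

definition T_invariant_fun :: "(complex^'r::finite) set \<Rightarrow> (complex^'r \<Rightarrow> 'b) \<Rightarrow> bool" where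
  "T_invariant_fun R f \<longleftrightarrow> (\<forall>\<theta> z. z \<in> R \<longrightarrow> f (torus_act \<theta> z) = f z)"

definition reinhardt_domain :: "(complex^'r::finite) set \<Rightarrow> bool" where
  "reinhardt_domain R \<longleftrightarrow> open R \<and> R \<subseteq> unit_polydisc \<and> T_invariant_set R"

definition tanh_map :: "real^'r::finite \<Rightarrow> complex^'r" where
  "tanh_map a = (\<chi> j. complex_of_real (tanh (a$j)))"

definition tanh_domain :: "(complex^'r::finite) set \<Rightarrow> (real^'r) set" where
  "tanh_domain R = {a. tanh_map a \<in> R}"

definition tilde :: "(complex^'r::finite \<Rightarrow> real) \<Rightarrow> real^'r \<Rightarrow> real" where
  "tilde f = (\<lambda>a. f (tanh_map a))"

definition coth :: "real \<Rightarrow> real" where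
  "coth x = cosh x / sinh x"

definition reflect :: "'r::finite \<Rightarrow> real^'r \<Rightarrow> real^'r" where
  "reflect j a = (\<chi> k. if k = j then - (a$k) else a$k)"

definition pd :: "'r::finite \<Rightarrow> (real^'r \<Rightarrow> real) \<Rightarrow> real^'r \<Rightarrow> real" where
  "pd j g = dderiv g (axis j 1)"

text \<open>The diagonal term 2 coth(2a_j) dg/da_j, replaced at a_j = 0 by its continuous
  extension d^2 g/da_j^2.\<close>
definition diag_term :: "(real^'r::finite \<Rightarrow> real) \<Rightarrow> 'r \<Rightarrow> real^'r \<Rightarrow> real" where
  "diag_term g j H = (if H$j = 0 then pd j (pd j g) H else 2 * coth (2 * H$j) * pd j g H)"

definition logconv_matrix :: "(real^'r::finite \<Rightarrow> real) \<Rightarrow> real^'r \<Rightarrow> 'r \<Rightarrow> 'r \<Rightarrow> real" where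
  "logconv_matrix g H j l = (if j = l then diag_term g j H else 0) + pd j (pd l g) H"

definition LogConv_inf_plus_Z2 :: "(real^'r::finite) set \<Rightarrow> (real^'r \<Rightarrow> real) \<Rightarrow> bool" where
  "LogConv_inf_plus_Z2 D g \<longleftrightarrow>
     smooth_on D g
     \<and> (\<forall>a\<in>D. \<forall>j. reflect j a \<in> D \<and> g (reflect j a) = g a)
     \<and> (\<forall>H\<in>D. \<forall>v::real^'r. v \<noteq> 0 \<longrightarrow>
          (\<Sum>j\<in>UNIV. \<Sum>l\<in>UNIV. logconv_matrix g H j l * v$j * v$l) > 0)"

end

theory Submission
  imports Defs
begin

definition Sn :: "nat \<Rightarrow> 'a::real_normed_vector set \<Rightarrow> ('a \<Rightarrow> 'b::real_normed_vector) \<Rightarrow> bool" where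
  "Sn n S k \<longleftrightarrow> (\<forall>vs. length vs \<le> n \<longrightarrow> (\<forall>x\<in>S. iter_dderiv k vs differentiable (at x)))"

lemma iter_snoc: "iter_dderiv k (vs @ [v]) = iter_dderiv (dderiv k v) vs"
  by (induction vs) auto

lemma fd_cong:
  assumes "open S" "x \<in> S" "\<And>y. y \<in> S \<Longrightarrow> k y = k' y"
  shows "frechet_derivative k (at x) = frechet_derivative k' (at x)"
proof -
  have "\<And>D. (k has_derivative D) (at x) \<longleftrightarrow> (k' has_derivative D) (at x)"
    using has_derivative_transform_within_open[OF _ assms(1,2), of k _ UNIV k'] 
          has_derivative_transform_within_open[OF _ assms(1,2), of k' _ UNIV k] assms(3)
    by auto
  then show ?thesis unfolding frechet_derivative_def by simp
qed

lemma dderiv_cong: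
  assumes "open S" "x \<in> S" "\<And>y. y \<in> S \<Longrightarrow> k y = k' y"
  shows "dderiv k v x = dderiv k' v x"
  unfolding dderiv_def using fd_cong[OF assms] by simp

lemma diff_cong:
  assumes "open S" "x \<in> S" "\<And>y. y \<in> S \<Longrightarrow> k y = k' y"
  shows "k differentiable (at x) \<longleftrightarrow> k' differentiable (at x)"
  unfolding differentiable_def
  using has_derivative_transform_within_open[OF _ assms(1,2), of k _ UNIV k'] 
          has_derivative_transform_within_open[OF _ assms(1,2), of k' _ UNIV k] assms(3)
  by auto

lemma iter_cong:
  assumes "open S" "\<And>y. y \<in> S \<Longrightarrow> k y = k' y"
  shows "y \<in> S \<Longrightarrow> iter_dderiv k vs y = iter_dderiv k' vs y"
proof (induction vs arbitrary: y)
  case Nil then show ?case using assms by simp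
next
  case (Cons v vs) then show ?case using dderiv_cong[OF assms(1) Cons(2), of "iter_dderiv k vs" "iter_dderiv k' vs"] by simp
qed

lemma Sn_cong:
  fixes k :: "'a::real_normed_vector \<Rightarrow> 'b::real_normed_vector"
  assumes "open S" "\<And>y. y \<in> S \<Longrightarrow> k y = k' y" "Sn n S k"
  shows "Sn n S k'"
  unfolding Sn_def
proof (intro allI impI ballI)
  fix vs :: "'a list" and x assume "length vs \<le> n" "x \<in> S"
  then have "iter_dderiv k vs differentiable (at x)" using assms(3) unfolding Sn_def by blast
  then show "iter_dderiv k' vs differentiable (at x)"
    using diff_cong[OF assms(1) \<open>x\<in>S\<close>, of "iter_dderiv k vs" "iter_dderiv k' vs"] iter_cong[OF assms(1), of k k'] assms(2)
    by blast
qed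

lemma Sn_Suc: fixes k :: "'a::real_normed_vector \<Rightarrow> 'b::real_normed_vector" shows "Sn (Suc n) S k \<longleftrightarrow> (\<forall>x\<in>S. k differentiable (at x)) \<and> (\<forall>v. Sn n S (dderiv k v))"
proof
  assume H: "Sn (Suc n) S k"
  have "\<forall>x\<in>S. k differentiable (at x)" using H unfolding Sn_def
    by (metis iter_dderiv.simps(1) le0 list.size(3))
  moreover have "Sn n S (dderiv k v)" for v
    unfolding Sn_def
  proof (intro allI impI)
    fix vs :: "'a list" assume "length vs \<le> n"
    then show "\<forall>x\<in>S. iter_dderiv (dderiv k v) vs differentiable (at x)"
      using H unfolding Sn_def by (metis iter_snoc length_append_singleton Suc_le_mono)
  qed
  ultimately show "(\<forall>x\<in>S. k differentiable (at x)) \<and> (\<forall>v. Sn n S (dderiv k v))" by blast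
next
  assume H: "(\<forall>x\<in>S. k differentiable (at x)) \<and> (\<forall>v. Sn n S (dderiv k v))"
  show "Sn (Suc n) S k" unfolding Sn_def
  proof (intro allI impI)
    fix vs :: "'a list" assume L: "length vs \<le> Suc n"
    show "\<forall>x\<in>S. iter_dderiv k vs differentiable (at x)"
    proof (cases vs rule: rev_cases)
      case Nil then show ?thesis using H by simp
    next
      case (snoc ws v)
      then have "length ws \<le> n" using L by simp
      then show ?thesis using H unfolding snoc iter_snoc Sn_def by blast
    qed
  qed
qed

lemma Sn_mono: "Sn (Suc n) S k \<Longrightarrow> Sn n S k"
  unfolding Sn_def by auto

lemma smooth_on_iff: "smooth_on S k \<longleftrightarrow> open S \<and> (\<forall>n. Sn n S k)"
  unfolding smooth_on_def Sn_def by blast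

lemma Sn_0_iff: "Sn 0 S k \<longleftrightarrow> (\<forall>x\<in>S. k differentiable (at x))"
  unfolding Sn_def by auto

lemma Sn_const: "Sn n S (\<lambda>x. c)"
proof (induction n arbitrary: c)
  case 0 then show ?case by (simp add: Sn_0_iff)
next
  case (Suc n)
  have e: "dderiv (\<lambda>x. c) v = (\<lambda>x. 0)" for v unfolding dderiv_def by simp
  show ?case unfolding Sn_Suc e using Suc by simp
qed

lemma dderiv_at: "(k has_derivative D) (at x) \<Longrightarrow> dderiv k v x = D v"
  unfolding dderiv_def using frechet_derivative_at by metis

lemma Sn_linear: assumes "bounded_linear L" shows "Sn n S L"
proof (cases n)
  case 0 then show ?thesis using assms by (auto simp: Sn_0_iff intro: bounded_linear_imp_differentiable)
next
  case (Suc m)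
  have "dderiv L v = (\<lambda>x. L v)" for v
    using dderiv_at[OF bounded_linear_imp_has_derivative[OF assms]] by auto
  then show ?thesis using Suc Sn_const assms by (auto simp: Sn_Suc intro: bounded_linear_imp_differentiable)
qed

lemma Sn_add:
  assumes "open S"
  shows "Sn n S p \<Longrightarrow> Sn n S q \<Longrightarrow> Sn n S (\<lambda>x. p x + q x)"
proof (induction n arbitrary: p q)
  case 0 then show ?case by (auto simp: Sn_0_iff)
next
  case (Suc n)
  have dp: "\<forall>x\<in>S. p differentiable (at x)" and dq: "\<forall>x\<in>S. q differentiable (at x)"
    using Suc.prems by (auto simp: Sn_Suc)
  have "dderiv (\<lambda>x. p x + q x) v y = dderiv p v y + dderiv q v y" if "y \<in> S" for v y
  proof -
    have "((\<lambda>x. p x + q x) has_derivative (\<lambda>h. frechet_derivative p (at y) h + frechet_derivative q (at y) h)) (at y)"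
      using dp dq that by (auto intro!: has_derivative_add simp: frechet_derivative_works[symmetric])
    then show ?thesis using dderiv_at unfolding dderiv_def by metis
  qed
  moreover have "Sn n S (\<lambda>y. dderiv p v y + dderiv q v y)" for v
    using Suc by (auto simp: Sn_Suc)
  ultimately have "Sn n S (dderiv (\<lambda>x. p x + q x) v)" for v
    using Sn_cong[OF assms] by (metis (no_types, lifting))
  then show ?case using dp dq by (auto simp: Sn_Suc)
qed

lemma Sn_mult:
  fixes p q :: "'a::real_normed_vector \<Rightarrow> real"
  assumes "open S"
  shows "Sn n S p \<Longrightarrow> Sn n S q \<Longrightarrow> Sn n S (\<lambda>x. p x * q x)"
proof (induction n arbitrary: p q)
  case 0 then show ?case by (auto simp: Sn_0_iff)
next
  case (Suc n)
  have dp: "\<forall>x\<in>S. p differentiable (at x)" and dq: "\<forall>x\<in>S. q differentiable (at x)"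
    using Suc.prems by (auto simp: Sn_Suc)
  have "dderiv (\<lambda>x. p x * q x) v y = p y * dderiv q v y + dderiv p v y * q y" if "y \<in> S" for v y
  proof -
    have "((\<lambda>x. p x * q x) has_derivative (\<lambda>h. p y * frechet_derivative q (at y) h + frechet_derivative p (at y) h * q y)) (at y)"
      using dp dq that by (auto intro!: has_derivative_mult simp: frechet_derivative_works[symmetric])
    then show ?thesis using dderiv_at unfolding dderiv_def by metis
  qed
  moreover have "Sn n S (\<lambda>y. p y * dderiv q v y + dderiv p v y * q y)" for v
    using Suc Sn_mono Sn_add[OF assms] by (metis Sn_Suc)
  ultimately have "Sn n S (dderiv (\<lambda>x. p x * q x) v)" for v
    using Sn_cong[OF assms] by (metis (no_types, lifting))
  then show ?case using dp dq by (auto simp: Sn_Suc intro: differentiable_mult)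
qed

lemma Sn_sum:
  fixes p :: "'i \<Rightarrow> 'a::real_normed_vector \<Rightarrow> 'b::real_normed_vector"
  assumes "open S" "finite I" "\<And>i. i \<in> I \<Longrightarrow> Sn n S (p i)"
  shows "Sn n S (\<lambda>x. \<Sum>i\<in>I. p i x)"
  using assms(2,3)
proof (induction I rule: finite_induct)
  case empty then show ?case using Sn_const by simp
next
  case (insert i I)
  have "Sn n S (\<lambda>x. p i x + (\<Sum>i\<in>I. p i x))" by (rule Sn_add[OF assms(1)]) (use insert in auto)
  then show ?case using insert by simp
qed

lemma sum_axis_nth: "(\<Sum>j\<in>UNIV. c j *\<^sub>R (axis j (w::complex) :: complex^'r::finite)) $ k = c k *\<^sub>R w"
proof -
  have "(\<Sum>j\<in>UNIV. c j *\<^sub>R (axis j w :: complex^'r)) $ k = (\<Sum>j\<in>UNIV. (if j = k then c j *\<^sub>R w else 0))"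
    unfolding sum_component vector_scaleR_component by (rule sum.cong) (auto simp: axis_def)
  also have "\<dots> = c k *\<^sub>R w" by (simp add: sum.delta')
  finally show ?thesis .
qed

lemma tanh_map_sum: "tanh_map a = (\<Sum>j\<in>UNIV. tanh (a$j) *\<^sub>R (axis j 1 :: complex^'r::finite))"
  unfolding vec_eq_iff tanh_map_def vec_lambda_beta sum_axis_nth by (simp add: scaleR_conv_of_real)

lemma DERIV_tanh_real: "DERIV tanh (x::real) :> 1 - tanh x ^ 2"
proof -
  have "cosh x \<noteq> 0" by (metis cosh_real_pos less_irrefl)
  then show ?thesis
    unfolding tanh_def by (auto intro!: derivative_eq_intros simp: power2_eq_square field_split_simps)
qed

lemma tanh_map_deriv:
  "(tanh_map has_derivative (\<lambda>v. \<Sum>j\<in>UNIV. ((1 - tanh (a$j)^2) * v$j) *\<^sub>R (axis j 1 :: complex^'r::finite))) (at a)"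
proof -
  have c: "cosh (a$j) \<noteq> 0" for j :: 'r by (metis cosh_real_pos less_irrefl)
  have "((\<lambda>a. \<Sum>j\<in>UNIV. tanh (a$j) *\<^sub>R (axis j 1 :: complex^'r)) has_derivative (\<lambda>v. \<Sum>j\<in>UNIV. (v$j * (1 - tanh (a$j)^2)) *\<^sub>R (axis j 1 :: complex^'r))) (at a)"
    apply (rule has_derivative_sum)
    apply (rule has_derivative_scaleR_left)
    apply (rule DERIV_compose_FDERIV[where f=tanh, OF DERIV_tanh_real])
    apply (rule bounded_linear_imp_has_derivative)
    by (rule bounded_linear_vec_nth)
  then show ?thesis by (simp add: tanh_map_sum[abs_def] mult.commute)
qed

lemma tanh_map_differentiable: "tanh_map differentiable (at a)"
  using tanh_map_deriv unfolding differentiable_def by blast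

lemma open_tanh_domain: "open R \<Longrightarrow> open (tanh_domain R)"
  unfolding tanh_domain_def
  using continuous_open_vimage[of R tanh_map] differentiable_imp_continuous_within tanh_map_differentiable
  by (metis vimage_def continuous_at_imp_continuous_on isCont_def)

lemma dderiv_comp_tanh:
  fixes F :: "complex^'r::finite \<Rightarrow> real"
  assumes "F differentiable (at (tanh_map a))"
  shows "dderiv (\<lambda>a. F (tanh_map a)) v a = (\<Sum>j\<in>UNIV. (v$j * (1 - tanh (a$j)^2)) * dderiv F (axis j 1) (tanh_map a))"
proof -
  let ?F' = "frechet_derivative F (at (tanh_map a))"
  have F': "(F has_derivative ?F') (at (tanh_map a))" using assms frechet_derivative_works by blast
  have "((\<lambda>a. F (tanh_map a)) has_derivative (\<lambda>v. ?F' (\<Sum>j\<in>UNIV. ((1 - tanh (a$j)^2) * v$j) *\<^sub>R (axis j 1 :: complex^'r)))) (at a)"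
    using has_derivative_compose[OF tanh_map_deriv F'] by (simp add: o_def)
  then have "dderiv (\<lambda>a. F (tanh_map a)) v a = ?F' (\<Sum>j\<in>UNIV. ((1 - tanh (a$j)^2) * v$j) *\<^sub>R (axis j 1 :: complex^'r))"
    by (rule dderiv_at)
  also have "\<dots> = (\<Sum>j\<in>UNIV. ((1 - tanh (a$j)^2) * v$j) * ?F' (axis j 1))"
    using has_derivative_linear[OF F'] by (simp add: linear_sum linear_cmul)
  finally show ?thesis unfolding dderiv_def by (simp add: mult.commute)
qed

lemma Sn_k:
  fixes S :: "(complex^'r::finite) set"
  assumes "open S"
  shows "Sn n S (\<lambda>z. 1 - Re (z$j) * Re (z$j))"
proof -
  have bl: "bounded_linear (\<lambda>z::complex^'r. Re (z$j))"
    using bounded_linear_compose[OF bounded_linear_Re bounded_linear_vec_nth[of j]] by simp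
  have "Sn n S (\<lambda>z. 1 + (-1) * (Re (z$j) * Re (z$j)))"
    by (intro Sn_add[OF assms] Sn_mult[OF assms] Sn_const Sn_linear[OF bl])
  then show ?thesis by simp
qed

lemma smooth_Sn: "smooth_on S F \<Longrightarrow> Sn n S F"
  by (simp add: smooth_on_iff)

lemma smooth_dderiv: "smooth_on S F \<Longrightarrow> smooth_on S (dderiv F v)"
  by (auto simp: smooth_on_iff) (metis Sn_Suc)

lemma comp_smooth:
  fixes R :: "(complex^'r::finite) set"
  assumes "open R"
  shows "\<forall>F. smooth_on R F \<longrightarrow> Sn n (tanh_domain R) (\<lambda>a. (F::complex^'r \<Rightarrow> real) (tanh_map a))"
proof (induction n)
  case 0
  show ?case
  proof (intro allI impI)
    fix F :: "complex^'r \<Rightarrow> real" assume "smooth_on R F"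
    then have "\<forall>x\<in>R. F differentiable (at x)" by (metis Sn_0_iff smooth_Sn)
    then show "Sn 0 (tanh_domain R) (\<lambda>a. F (tanh_map a))"
      unfolding Sn_0_iff tanh_domain_def
      using differentiable_chain_at[OF tanh_map_differentiable] by (auto simp: o_def)
  qed
next
  case (Suc n)
  show ?case
  proof (intro allI impI)
    fix F :: "complex^'r \<Rightarrow> real" assume sF: "smooth_on R F"
    then have dF: "\<forall>x\<in>R. F differentiable (at x)" by (metis Sn_0_iff smooth_Sn)
    have dC: "\<forall>x\<in>tanh_domain R. (\<lambda>a. F (tanh_map a)) differentiable (at x)"
      unfolding tanh_domain_def
      using differentiable_chain_at[OF tanh_map_differentiable] dF by (auto simp: o_def)
    have "Sn n (tanh_domain R) (dderiv (\<lambda>a. F (tanh_map a)) v)" for v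
    proof -
      define G where "G = (\<lambda>z. \<Sum>j\<in>UNIV. v$j * ((1 - Re (z$j) * Re (z$j)) * dderiv F (axis j 1) z))"
      have "Sn m R G" for m
        unfolding G_def
        apply (rule Sn_sum[OF assms], simp)
        apply (rule Sn_mult[OF assms], rule Sn_const)
        apply (rule Sn_mult[OF assms], rule Sn_k[OF assms])
        by (rule smooth_Sn[OF smooth_dderiv[OF sF]])
      then have "smooth_on R G" using assms by (simp add: smooth_on_iff)
      then have "Sn n (tanh_domain R) (\<lambda>a. G (tanh_map a))" using Suc by blast
      moreover have "G (tanh_map a) = dderiv (\<lambda>a. F (tanh_map a)) v a" if "a \<in> tanh_domain R" for a
        using dderiv_comp_tanh[of F a v] dF that
        unfolding G_def tanh_domain_def
        by (auto simp: tanh_map_def power2_eq_square algebra_simps intro!: sum.cong)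
      ultimately show ?thesis
        using Sn_cong[OF open_tanh_domain[OF assms]] by (metis (no_types, lifting))
    qed
    then show "Sn (Suc n) (tanh_domain R) (\<lambda>a. F (tanh_map a))"
      using dC by (simp add: Sn_Suc)
  qed
qed

lemma transport:
  fixes k k' :: "'a::real_normed_vector \<Rightarrow> 'b::real_normed_vector"
  assumes "open R" "bounded_linear \<sigma>" "z \<in> R" "\<And>y. y \<in> R \<Longrightarrow> k (\<sigma> y) = k' y"
    "k differentiable (at (\<sigma> z))"
  shows "dderiv k' v z = dderiv k (\<sigma> v) (\<sigma> z)"
proof -
  have "((\<lambda>y. k (\<sigma> y)) has_derivative (\<lambda>v. frechet_derivative k (at (\<sigma> z)) (\<sigma> v))) (at z)"
    using has_derivative_compose[OF bounded_linear_imp_has_derivative[OF assms(2)]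
        frechet_derivative_works[THEN iffD1, OF assms(5)]] by (simp add: o_def)
  then have "(k' has_derivative (\<lambda>v. frechet_derivative k (at (\<sigma> z)) (\<sigma> v))) (at z)"
    by (rule has_derivative_transform_within_open[OF _ assms(1,3)]) (use assms(4) in auto)
  then show ?thesis using dderiv_at unfolding dderiv_def by metis
qed

lemma linear_torus: "linear (torus_act \<theta>)"
  by (rule linearI) (auto simp: torus_act_def vec_eq_iff algebra_simps scaleR_conv_of_real)

lemma bounded_linear_torus: "bounded_linear (torus_act \<theta>)"
  using linear_torus linear_conv_bounded_linear by blast

lemma torus_axis: "torus_act \<theta> (axis j c) = axis j (cis (\<theta> j) * c)"
  by (auto simp: torus_act_def vec_eq_iff axis_def)

lemma torus_torus: "torus_act \<theta> (torus_act \<phi> z) = torus_act (\<lambda>k. \<theta> k + \<phi> k) z"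
  by (auto simp: torus_act_def vec_eq_iff cis_mult)

lemma torus_zero: "torus_act (\<lambda>k. 0) z = z"
  by (auto simp: torus_act_def vec_eq_iff)

lemma torus_neg: "torus_act (\<lambda>k. - \<theta> k) (torus_act \<theta> z) = z"
  by (simp add: torus_torus torus_zero)

lemma torus_neg': "torus_act \<theta> (torus_act (\<lambda>k. - \<theta> k) z) = z"
  by (simp add: torus_torus torus_zero)

lemma axis_add: "axis j (a + b) = axis j a + (axis j b :: 'a::comm_monoid_add^'r::finite)"
  by (auto simp: axis_def vec_eq_iff)

lemma axis_scaleR: "axis j (r *\<^sub>R c) = r *\<^sub>R (axis j c :: complex^'r::finite)"
  by (auto simp: axis_def vec_eq_iff)

lemma torus_path:
  "torus_act (\<lambda>m. if m = j then t else 0) z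
     = z + (cos t - 1) *\<^sub>R axis j (z$j) + sin t *\<^sub>R axis j (\<i> * z$j)"
  by (auto simp: torus_act_def vec_eq_iff axis_def cis.ctr complex_eq_iff algebra_simps)

lemma infinitesimal:
  fixes k :: "complex^'r::finite \<Rightarrow> 'b::real_normed_vector"
  assumes "k differentiable (at z)" "\<And>t. k (torus_act (\<lambda>m. if m = j then t else 0) z) = k z"
  shows "dderiv k (axis j (\<i> * z$j)) z = 0"
proof -
  let ?p = "\<lambda>t. z + (cos t - 1) *\<^sub>R axis j (z$j) + sin t *\<^sub>R axis j (\<i> * z$j)"
  let ?D = "frechet_derivative k (at z)"
  have p0: "?p 0 = z" by simp
  have pd: "(?p has_derivative (\<lambda>s. s *\<^sub>R axis j (\<i> * z$j))) (at 0)"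
    by (auto intro!: derivative_eq_intros)
  have kD: "(k has_derivative ?D) (at (?p 0))"
    using assms(1) p0 frechet_derivative_works by metis
  have "((\<lambda>t. k (?p t)) has_derivative (\<lambda>s. ?D (s *\<^sub>R axis j (\<i> * z$j)))) (at 0)"
    using has_derivative_compose[OF pd kD] by (simp add: o_def)
  moreover have "(\<lambda>t. k (?p t)) = (\<lambda>t. k z)"
    using assms(2) by (simp add: torus_path[symmetric])
  ultimately have "((\<lambda>t. k z) has_derivative (\<lambda>s. ?D (s *\<^sub>R axis j (\<i> * z$j)))) (at (0::real))"
    by simp
  then have "(\<lambda>s. ?D (s *\<^sub>R axis j (\<i> * z$j))) = (\<lambda>s. 0)"
    using has_derivative_unique has_derivative_const by blast
  then have "?D (1 *\<^sub>R axis j (\<i> * z$j)) = 0" by metis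
  then show ?thesis unfolding dderiv_def by simp
qed

lemma dderiv_scale:
  assumes "k differentiable (at y)"
  shows "dderiv k (r *\<^sub>R p) y = r *\<^sub>R dderiv k p y"
  using linear_frechet_derivative[OF assms] unfolding dderiv_def by (simp add: linear_scale)

lemma dderiv_add:
  assumes "k differentiable (at y)"
  shows "dderiv k (p + q) y = dderiv k p y + dderiv k q y"
  using linear_frechet_derivative[OF assms] unfolding dderiv_def by (simp add: linear_add)

lemma dderiv_sum:
  assumes "k differentiable (at y)"
  shows "dderiv k (\<Sum>i\<in>I. p i) y = (\<Sum>i\<in>I. dderiv k (p i) y)"
  using linear_frechet_derivative[OF assms] unfolding dderiv_def by (simp add: linear_sum)

lemma dderiv_fun_scale:
  fixes k :: "'a::real_normed_vector \<Rightarrow> real"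
  assumes "k differentiable (at y)"
  shows "dderiv (\<lambda>x. r * k x) p y = r * dderiv k p y"
proof -
  have "((\<lambda>x. r * k x) has_derivative (\<lambda>h. r * frechet_derivative k (at y) h)) (at y)"
    using assms by (auto intro!: derivative_eq_intros simp: frechet_derivative_works[symmetric])
  then show ?thesis using dderiv_at unfolding dderiv_def by metis
qed

lemma dderiv_fun_add:
  fixes k :: "'a::real_normed_vector \<Rightarrow> real"
  assumes "k differentiable (at y)" "k' differentiable (at y)"
  shows "dderiv (\<lambda>x. k x + k' x) p y = dderiv k p y + dderiv k' p y"
proof -
  have "((\<lambda>x. k x + k' x) has_derivative (\<lambda>h. frechet_derivative k (at y) h + frechet_derivative k' (at y) h)) (at y)"
    using assms by (auto intro!: derivative_eq_intros simp: frechet_derivative_works[symmetric])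
  then show ?thesis using dderiv_at unfolding dderiv_def by metis
qed

locale psetup =
  fixes R :: "(complex^'r::finite) set" and f :: "complex^'r \<Rightarrow> real"
  assumes oR: "open R" and invR: "T_invariant_set R" and sf: "smooth_on R f" and invf: "T_invariant_fun R f"
begin

lemma d1: "y \<in> R \<Longrightarrow> f differentiable (at y)"
  using sf unfolding smooth_on_def by (metis iter_dderiv.simps(1))

lemma d2: "y \<in> R \<Longrightarrow> dderiv f v differentiable (at y)"
  using sf unfolding smooth_on_def by (metis iter_dderiv.simps)

lemma d3: "y \<in> R \<Longrightarrow> dderiv (dderiv f v) u differentiable (at y)"
  using sf unfolding smooth_on_def by (metis iter_dderiv.simps)

lemma torusR: "z \<in> R \<Longrightarrow> torus_act \<theta> z \<in> R"
  using invR unfolding T_invariant_set_def by blast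

lemma inv1: "z \<in> R \<Longrightarrow> dderiv f v z = dderiv f (torus_act \<theta> v) (torus_act \<theta> z)"
  by (rule transport[OF oR bounded_linear_torus]) (use invf torusR d1 in \<open>auto simp: T_invariant_fun_def\<close>)

lemma inv2: "z \<in> R \<Longrightarrow> dderiv (dderiv f q) p z = dderiv (dderiv f (torus_act \<theta> q)) (torus_act \<theta> p) (torus_act \<theta> z)"
  by (rule transport[OF oR bounded_linear_torus]) (use inv1 torusR d2 in auto)

lemma inner_scale: "z \<in> R \<Longrightarrow> dderiv (dderiv f (r *\<^sub>R q)) p z = r * dderiv (dderiv f q) p z"
proof -
  assume z: "z \<in> R"
  have "dderiv (dderiv f (r *\<^sub>R q)) p z = dderiv (\<lambda>y. r * dderiv f q y) p z"
    by (rule dderiv_cong[OF oR z]) (auto simp: dderiv_scale[OF d1])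
  also have "\<dots> = r * dderiv (dderiv f q) p z" by (rule dderiv_fun_scale[OF d2[OF z]])
  finally show ?thesis .
qed

lemma inner_add: "z \<in> R \<Longrightarrow> dderiv (dderiv f (q + q')) p z = dderiv (dderiv f q) p z + dderiv (dderiv f q') p z"
proof -
  assume z: "z \<in> R"
  have "dderiv (dderiv f (q + q')) p z = dderiv (\<lambda>y. dderiv f q y + dderiv f q' y) p z"
    by (rule dderiv_cong[OF oR z]) (auto simp: dderiv_add[OF d1])
  also have "\<dots> = dderiv (dderiv f q) p z + dderiv (dderiv f q') p z" by (rule dderiv_fun_add[OF d2[OF z] d2[OF z]])
  finally show ?thesis .
qed

lemma inner_sum: "finite I \<Longrightarrow> z \<in> R \<Longrightarrow> dderiv (dderiv f (\<Sum>i\<in>I. q i)) p z = (\<Sum>i\<in>I. dderiv (dderiv f (q i)) p z)"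
proof (induction I rule: finite_induct)
  case empty
  show ?case using inner_scale[OF empty(1), of 0 0 p] by simp
next
  case (insert i I) then show ?case by (simp add: inner_add)
qed

lemma outer_scale: assumes "z \<in> R" shows "dderiv (dderiv f q) (r *\<^sub>R p) z = r * dderiv (dderiv f q) p z"
  using dderiv_scale[OF d2[OF assms]] by simp

lemma outer_sum: assumes "z \<in> R" shows "dderiv (dderiv f q) (\<Sum>i\<in>I. p i) z = (\<Sum>i\<in>I. dderiv (dderiv f q) (p i) z)"
  by (rule dderiv_sum[OF d2[OF assms]])

lemma U1: "z \<in> R \<Longrightarrow> dderiv f (axis j (\<i> * z$j)) z = 0"
  by (rule infinitesimal[OF d1]) (use invf in \<open>auto simp: T_invariant_fun_def\<close>)

lemma U2: "z \<in> R \<Longrightarrow> l \<noteq> j \<Longrightarrow> dderiv (dderiv f (axis l 1)) (axis j (\<i> * z$j)) z = 0"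
proof -
  assume z: "z \<in> R" and lj: "l \<noteq> j"
  show ?thesis
  proof (rule infinitesimal[OF d2[OF z]])
    fix t :: real
    let ?\<theta> = "(\<lambda>m. if m = j then t else 0)"
    have "dderiv f (axis l 1 :: complex^'r) z = dderiv f (torus_act ?\<theta> (axis l 1)) (torus_act ?\<theta> z)"
      by (rule inv1[OF z])
    also have "torus_act ?\<theta> (axis l 1) = axis l 1" using lj by (simp add: torus_axis)
    finally show "dderiv f (axis l 1) (torus_act ?\<theta> z) = dderiv f (axis l 1) z" by simp
  qed
qed

lemma axis_i_mult: "axis l (\<i> * c) = Re c *\<^sub>R axis l \<i> + (- Im c) *\<^sub>R (axis l 1 :: complex^'r)"
  by (auto simp: axis_def vec_eq_iff complex_eq_iff)

lemma U3:
  assumes x: "x \<in> R"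
  shows "Re (u$l) * dderiv f (axis l \<i>) x + Re (x$l) * dderiv (dderiv f (axis l \<i>)) u x
         - (Im (u$l) * dderiv f (axis l 1) x + Im (x$l) * dderiv (dderiv f (axis l 1)) u x) = 0"
proof -
  define \<Phi> where "\<Phi> = (\<lambda>y. Re (y$l) * dderiv f (axis l \<i>) y - Im (y$l) * dderiv f (axis l 1) y)"
  have "\<Phi> y = 0" if "y \<in> R" for y
  proof -
    have "0 = dderiv f (axis l (\<i> * y$l)) y" using U1[OF that] by simp
    also have "\<dots> = Re (y$l) *\<^sub>R dderiv f (axis l \<i>) y + (- Im (y$l)) *\<^sub>R dderiv f (axis l 1) y"
      by (simp only: axis_i_mult dderiv_add[OF d1[OF that]] dderiv_scale[OF d1[OF that]])
    also have "\<dots> = \<Phi> y" unfolding \<Phi>_def by simp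
    finally show ?thesis by simp
  qed
  then have "dderiv \<Phi> u x = dderiv (\<lambda>y. 0::real) u x"
    by (intro dderiv_cong[OF oR x]) auto
  also have "\<dots> = 0" unfolding dderiv_def by simp
  finally have z: "dderiv \<Phi> u x = 0" .
  have bRe: "bounded_linear (\<lambda>y::complex^'r. Re (y$l))"
    using bounded_linear_compose[OF bounded_linear_Re bounded_linear_vec_nth[of l]] by simp
  have bIm: "bounded_linear (\<lambda>y::complex^'r. Im (y$l))"
    using bounded_linear_compose[OF bounded_linear_Im bounded_linear_vec_nth[of l]] by simp
  have hd: "(\<Phi> has_derivative (\<lambda>u. (Re (x$l) * frechet_derivative (dderiv f (axis l \<i>)) (at x) u + Re (u$l) * dderiv f (axis l \<i>) x)
       - (Im (x$l) * frechet_derivative (dderiv f (axis l 1)) (at x) u + Im (u$l) * dderiv f (axis l 1) x))) (at x)"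
    unfolding \<Phi>_def
    apply (rule has_derivative_diff)
     apply (rule has_derivative_mult[OF bounded_linear_imp_has_derivative[OF bRe]])
     apply (rule frechet_derivative_works[THEN iffD1, OF d2[OF x]])
    apply (rule has_derivative_mult[OF bounded_linear_imp_has_derivative[OF bIm]])
    apply (rule frechet_derivative_works[THEN iffD1, OF d2[OF x]])
    done
  have "dderiv \<Phi> u x = (Re (x$l) * dderiv (dderiv f (axis l \<i>)) u x + Re (u$l) * dderiv f (axis l \<i>) x)
       - (Im (x$l) * dderiv (dderiv f (axis l 1)) u x + Im (u$l) * dderiv f (axis l 1) x)"
    using dderiv_at[OF hd, of u] by (simp add: dderiv_def)
  with z show ?thesis by linarith
qed

end

context psetup begin

definition "Am x j l = dderiv (dderiv f (axis l 1)) (axis j 1) x"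
definition "Bm x j l = dderiv (dderiv f (axis l \<i>)) (axis j \<i>) x"
definition "Cm x j l = dderiv (dderiv f (axis l \<i>)) (axis j 1) x"
definition "Em x j l = dderiv (dderiv f (axis l 1)) (axis j \<i>) x"
definition "fd x l = dderiv f (axis l 1) x"

lemma refl_fix: "x$l = 0 \<Longrightarrow> torus_act (\<lambda>k. if k = l then \<theta> else 0) x = x"
  by (auto simp: torus_act_def vec_eq_iff)

lemma axis_neg: "axis l (- c) = - (axis l c :: complex^'r)"
  by (auto simp: axis_def vec_eq_iff)

lemma realpt: "\<forall>k. Im (x$k) = 0 \<Longrightarrow> Re (x$l) = 0 \<Longrightarrow> x$l = 0"
  by (simp add: complex_eq_iff)

lemma axis_nth_ne: "j \<noteq> l \<Longrightarrow> (axis j c :: complex^'r) $ l = 0"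
  by (simp add: axis_def)

lemma fact_a:
  assumes x: "x \<in> R" and im: "\<forall>k. Im (x$k) = 0" and jl: "j \<noteq> l"
  shows "Bm x j l = 0"
proof (cases "Re (x$l) = 0")
  case False
  have "Re (x$l) * Bm x j l = 0"
    using U3[OF x, of "axis j \<i>" l] im jl by (simp add: axis_nth_ne Bm_def)
  then show ?thesis using False by simp
next
  case True
  then have x0: "x$l = 0" using realpt im by blast
  let ?\<theta> = "\<lambda>k. if k = l then pi else 0"
  have "Bm x j l = dderiv (dderiv f (torus_act ?\<theta> (axis l \<i>))) (torus_act ?\<theta> (axis j \<i>)) (torus_act ?\<theta> x)"
    unfolding Bm_def by (rule inv2[OF x])
  also have "\<dots> = dderiv (dderiv f (- axis l \<i>)) (axis j \<i>) x"
    using jl by (simp add: torus_axis refl_fix[OF x0] axis_neg)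
  also have "\<dots> = - Bm x j l" unfolding Bm_def using inner_scale[OF x, of "-1"] by simp
  finally show ?thesis by simp
qed

lemma fact_b:
  assumes x: "x \<in> R" and im: "\<forall>k. Im (x$k) = 0" and jl: "j \<noteq> l"
  shows "Cm x j l = 0"
proof (cases "Re (x$l) = 0")
  case False
  have "Re (x$l) * Cm x j l = 0"
    using U3[OF x, of "axis j 1" l] im jl by (simp add: axis_nth_ne Cm_def)
  then show ?thesis using False by simp
next
  case True
  then have x0: "x$l = 0" using realpt im by blast
  let ?\<theta> = "\<lambda>k. if k = l then pi else 0"
  have "Cm x j l = dderiv (dderiv f (torus_act ?\<theta> (axis l \<i>))) (torus_act ?\<theta> (axis j 1)) (torus_act ?\<theta> x)"
    unfolding Cm_def by (rule inv2[OF x])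
  also have "\<dots> = dderiv (dderiv f (- axis l \<i>)) (axis j 1) x"
    using jl by (simp add: torus_axis refl_fix[OF x0] axis_neg)
  also have "\<dots> = - Cm x j l" unfolding Cm_def using inner_scale[OF x, of "-1"] by simp
  finally show ?thesis by simp
qed

lemma fact_c:
  assumes x: "x \<in> R" and im: "\<forall>k. Im (x$k) = 0" and jl: "j \<noteq> l"
  shows "Em x j l = 0"
proof (cases "Re (x$j) = 0")
  case False
  have ax: "axis j (\<i> * x$j) = Re (x$j) *\<^sub>R (axis j \<i> :: complex^'r)"
    using im by (auto simp: axis_def vec_eq_iff complex_eq_iff)
  have "Re (x$j) * Em x j l = 0"
    using U2[OF x jl[symmetric]] outer_scale[OF x] unfolding ax Em_def by simp
  then show ?thesis using False by simp
next
  case True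
  then have x0: "x$j = 0" using realpt im by blast
  let ?\<theta> = "\<lambda>k. if k = j then pi else 0"
  have "Em x j l = dderiv (dderiv f (torus_act ?\<theta> (axis l 1))) (torus_act ?\<theta> (axis j \<i>)) (torus_act ?\<theta> x)"
    unfolding Em_def by (rule inv2[OF x])
  also have "\<dots> = dderiv (dderiv f (axis l 1)) (- axis j \<i>) x"
    using jl by (simp add: torus_axis refl_fix[OF x0] axis_neg)
  also have "\<dots> = - Em x j l" unfolding Em_def using outer_scale[OF x, of _ "-1"] by simp
  finally show ?thesis by simp
qed

lemma fact_d1:
  assumes x: "x \<in> R" and im: "\<forall>k. Im (x$k) = 0"
  shows "Re (x$l) * Bm x l l = fd x l"
  using U3[OF x, of "axis l \<i>" l] im by (simp add: Bm_def fd_def)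

lemma fact_d2:
  assumes x: "x \<in> R" and im: "\<forall>k. Im (x$k) = 0" and x0: "Re (x$l) = 0"
  shows "Bm x l l = Am x l l"
proof -
  have x0: "x$l = 0" using realpt im x0 by blast
  let ?\<theta> = "\<lambda>k. if k = l then pi/2 else 0"
  have "Bm x l l = dderiv (dderiv f (torus_act ?\<theta> (axis l \<i>))) (torus_act ?\<theta> (axis l \<i>)) (torus_act ?\<theta> x)"
    unfolding Bm_def by (rule inv2[OF x])
  also have "\<dots> = dderiv (dderiv f (- axis l 1)) (- axis l 1) x"
    by (simp add: torus_axis refl_fix[OF x0] axis_neg)
  also have "\<dots> = Am x l l" unfolding Am_def using inner_scale[OF x, of "-1"] outer_scale[OF x, of _ "-1"] by simp
  finally show ?thesis .
qed

end

lemma dderiv_ofreal: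
  fixes k :: "'a::real_normed_vector \<Rightarrow> real"
  assumes "k differentiable (at z)"
  shows "dderiv (\<lambda>y. complex_of_real (k y)) u z = of_real (dderiv k u z)"
proof -
  have hd: "((\<lambda>y. complex_of_real (k y)) has_derivative (\<lambda>h. of_real (frechet_derivative k (at z) h))) (at z)"
    using frechet_derivative_works[THEN iffD1, OF assms(1)] by (auto intro!: derivative_eq_intros)
  show ?thesis using dderiv_at[OF hd, of u] by (simp add: dderiv_def)
qed

lemma dderiv_cplx:
  fixes k1 k2 :: "'a::real_normed_vector \<Rightarrow> real"
  assumes "k1 differentiable (at z)" "k2 differentiable (at z)"
  shows "dderiv (\<lambda>y. (complex_of_real (k1 y) + \<i> * complex_of_real (k2 y)) / 2) u z
       = (of_real (dderiv k1 u z) + \<i> * of_real (dderiv k2 u z)) / 2"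
proof -
  have hd: "((\<lambda>y. (complex_of_real (k1 y) + \<i> * complex_of_real (k2 y)) / 2) has_derivative
      (\<lambda>h. (of_real (frechet_derivative k1 (at z) h) + \<i> * of_real (frechet_derivative k2 (at z) h)) / 2)) (at z)"
    using frechet_derivative_works[THEN iffD1, OF assms(1)] frechet_derivative_works[THEN iffD1, OF assms(2)]
    by (auto intro!: derivative_eq_intros simp: field_simps)
  show ?thesis using dderiv_at[OF hd, of u] by (simp add: dderiv_def)
qed

context psetup begin

lemma wzbar: "y \<in> R \<Longrightarrow> wirt_zbar l (\<lambda>z. complex_of_real (f z)) y
   = (complex_of_real (dderiv f (axis l 1) y) + \<i> * complex_of_real (dderiv f (axis l \<i>) y)) / 2"
  unfolding wirt_zbar_def using dderiv_ofreal[OF d1] by simp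

lemma levi_eq:
  assumes z: "z \<in> R"
  shows "levi f j l z = (complex_of_real (Am z j l + Bm z j l) + \<i> * complex_of_real (Cm z j l - Em z j l)) / 4"
proof -
  let ?W0 = "\<lambda>y. (complex_of_real (dderiv f (axis l 1) y) + \<i> * complex_of_real (dderiv f (axis l \<i>) y)) / 2"
  have c: "dderiv (wirt_zbar l (\<lambda>z. complex_of_real (f z))) u z = dderiv ?W0 u z" for u
    by (rule dderiv_cong[OF oR z]) (use wzbar in auto)
  have d: "dderiv ?W0 u z = (of_real (dderiv (dderiv f (axis l 1)) u z) + \<i> * of_real (dderiv (dderiv f (axis l \<i>)) u z)) / 2" for u
    by (rule dderiv_cplx[OF d2[OF z] d2[OF z]])
  show ?thesis
    unfolding levi_def wirt_z_def c d Am_def Bm_def Cm_def Em_def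
    by (simp add: complex_eq_iff field_simps)
qed

definition "LS z w = Re (\<Sum>j\<in>UNIV. \<Sum>l\<in>UNIV. levi f j l z * w$j * cnj (w$l))"

definition "Pz z w = (\<Sum>j\<in>UNIV. \<Sum>l\<in>UNIV. (Am z j l + Bm z j l) * (Re (w$j) * Re (w$l) + Im (w$j) * Im (w$l))
     - (Cm z j l - Em z j l) * (Im (w$j) * Re (w$l) - Re (w$j) * Im (w$l)))"

lemma LS_Pz: "z \<in> R \<Longrightarrow> LS z w = Pz z w / 4"
  unfolding LS_def Pz_def
  by (simp add: levi_eq Re_sum sum_divide_distrib algebra_simps)

end

lemma decomp: "w = (\<Sum>k\<in>UNIV. Re (w$k) *\<^sub>R axis k 1 + Im (w$k) *\<^sub>R (axis k \<i> :: complex^'r::finite))"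
  unfolding vec_eq_iff by (simp only: sum.distrib vector_add_component sum_axis_nth) (simp add: complex_eq_iff)

context psetup begin

lemma inner_exp:
  assumes z: "z \<in> R"
  shows "dderiv (dderiv f (\<Sum>l\<in>UNIV. c l *\<^sub>R axis l 1 + d l *\<^sub>R axis l \<i>)) p z
     = (\<Sum>l\<in>UNIV. c l * dderiv (dderiv f (axis l 1)) p z + d l * dderiv (dderiv f (axis l \<i>)) p z)"
  by (simp add: inner_sum[OF _ z] inner_add[OF z] inner_scale[OF z])

lemma outer_exp:
  assumes z: "z \<in> R"
  shows "dderiv (dderiv f q) (\<Sum>j\<in>UNIV. a j *\<^sub>R axis j 1 + b j *\<^sub>R axis j \<i>) z
     = (\<Sum>j\<in>UNIV. a j * dderiv (dderiv f q) (axis j 1) z + b j * dderiv (dderiv f q) (axis j \<i>) z)"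
  by (simp add: outer_sum[OF z] dderiv_add[OF d2[OF z]] outer_scale[OF z])

lemma Q_expand:
  assumes z: "z \<in> R"
  shows "dderiv (dderiv f (\<Sum>l\<in>UNIV. c l *\<^sub>R axis l 1 + d l *\<^sub>R axis l \<i>)) (\<Sum>j\<in>UNIV. a j *\<^sub>R axis j 1 + b j *\<^sub>R axis j \<i>) z
   = (\<Sum>j\<in>UNIV. \<Sum>l\<in>UNIV. a j * c l * Am z j l + a j * d l * Cm z j l + b j * c l * Em z j l + b j * d l * Bm z j l)"
  unfolding outer_exp[OF z] inner_exp[OF z] Am_def Bm_def Cm_def Em_def
  by (rule sum.cong[OF refl]) (simp add: sum_distrib_left sum.distrib[symmetric] algebra_simps)


definition iv :: "complex^'r \<Rightarrow> complex^'r" where "iv w = (\<chi> k. \<i> * w$k)"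

lemma Q_w: assumes z: "z \<in> R"
  shows "dderiv (dderiv f w) w z = (\<Sum>j\<in>UNIV. \<Sum>l\<in>UNIV. Re (w$j) * Re (w$l) * Am z j l + Re (w$j) * Im (w$l) * Cm z j l
        + Im (w$j) * Re (w$l) * Em z j l + Im (w$j) * Im (w$l) * Bm z j l)"
proof -
  define W where "W = (\<Sum>k\<in>UNIV. Re (w$k) *\<^sub>R axis k 1 + Im (w$k) *\<^sub>R (axis k \<i> :: complex^'r))"
  have "w = W" unfolding W_def by (rule decomp)
  then have "dderiv (dderiv f w) w z = dderiv (dderiv f W) W z" by simp
  also have "\<dots> = (\<Sum>j\<in>UNIV. \<Sum>l\<in>UNIV. Re (w$j) * Re (w$l) * Am z j l + Re (w$j) * Im (w$l) * Cm z j l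
        + Im (w$j) * Re (w$l) * Em z j l + Im (w$j) * Im (w$l) * Bm z j l)" unfolding W_def by (rule Q_expand[OF z])
  finally show ?thesis .
qed

lemma Pz_Q: assumes z: "z \<in> R"
  shows "Pz z w = dderiv (dderiv f w) w z + dderiv (dderiv f (iv w)) (iv w) z"
  unfolding Q_w[OF z] Pz_def
  by (simp add: iv_def sum.distrib[symmetric] algebra_simps)

lemma torus_iv: "torus_act \<theta> (iv w) = iv (torus_act \<theta> w)"
  by (simp add: torus_act_def iv_def vec_eq_iff algebra_simps)

lemma Pz_inv: assumes x: "x \<in> R"
  shows "Pz (torus_act \<theta> x) (torus_act \<theta> w) = Pz x w"
  unfolding Pz_Q[OF x] Pz_Q[OF torusR[OF x]] inv2[OF x, of w w \<theta>] inv2[OF x, of "iv w" "iv w" \<theta>] torus_iv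
  by simp

definition "Km x j l = (if j = l then Am x j j + Bm x j j else Am x j l)"

lemma Pz_real: assumes x: "x \<in> R" and im: "\<forall>k. Im (x$k) = 0"
  shows "Pz x w = (\<Sum>j\<in>UNIV. \<Sum>l\<in>UNIV. Km x j l * (Re (w$j) * Re (w$l) + Im (w$j) * Im (w$l)))"
  unfolding Pz_def
proof (intro sum.cong refl)
  fix j l
  show "(Am x j l + Bm x j l) * (Re (w$j) * Re (w$l) + Im (w$j) * Im (w$l))
     - (Cm x j l - Em x j l) * (Im (w$j) * Re (w$l) - Re (w$j) * Im (w$l))
     = Km x j l * (Re (w$j) * Re (w$l) + Im (w$j) * Im (w$l))"
  proof (cases "j = l")
    case True then show ?thesis by (simp add: Km_def algebra_simps)
  next
    case False then show ?thesis using fact_a[OF x im False] fact_b[OF x im False] fact_c[OF x im False]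
      by (simp add: Km_def)
  qed
qed

end

lemma tanh_artanh:
  fixes r :: real assumes "-1 < r" "r < 1"
  shows "tanh (artanh r) = r"
proof -
  have u: "(1 + r) / (1 - r) > 0" using assms by simp
  have e: "exp (- 2 * artanh r) = (1 - r) / (1 + r)"
    unfolding artanh_def using u assms by (simp add: exp_minus exp_ln)
  show ?thesis unfolding tanh_real_altdef e using assms by (simp add: field_simps)
qed

lemma coth_double:
  fixes a :: real assumes "a \<noteq> 0"
  shows "2 * coth (2 * a) = (1 + tanh a ^ 2) / tanh a"
proof -
  have c: "cosh a \<noteq> 0" by (metis cosh_real_pos less_irrefl)
  have s: "sinh a \<noteq> 0" using assms by simp
  show ?thesis unfolding coth_def sinh_double cosh_double tanh_def
    using c s by (simp add: field_simps power2_eq_square)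
qed

lemma DERIV_sech2: "DERIV (\<lambda>t. 1 - tanh t ^ 2) (t::real) :> - (2 * tanh t * (1 - tanh t ^ 2))"
proof -
  have "DERIV (\<lambda>t. 1 - tanh t * tanh t) t :> 0 - ((1 - tanh t ^ 2) * tanh t + (1 - tanh t ^ 2) * tanh t)"
    by (intro DERIV_diff DERIV_const DERIV_mult DERIV_tanh_real)
  then show ?thesis by (simp add: power2_eq_square algebra_simps)
qed

lemma dderiv_mult:
  fixes p q :: "'a::real_normed_vector \<Rightarrow> real"
  assumes "p differentiable (at y)" "q differentiable (at y)"
  shows "dderiv (\<lambda>x. p x * q x) v y = p y * dderiv q v y + dderiv p v y * q y"
proof -
  have hd: "((\<lambda>x. p x * q x) has_derivative (\<lambda>h. p y * frechet_derivative q (at y) h + frechet_derivative p (at y) h * q y)) (at y)"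
    using assms by (auto intro!: has_derivative_mult simp: frechet_derivative_works[symmetric])
  show ?thesis using dderiv_at[OF hd, of v] by (simp add: dderiv_def)
qed

lemma axis_real_nth: "(axis l (1::real) :: real^'r::finite) $ j = (if j = l then 1 else 0)"
  by (simp add: axis_def)

lemma tm_im: "Im (tanh_map a $ k) = 0" by (simp add: tanh_map_def)
lemma tm_re: "Re (tanh_map a $ k) = tanh (a$k)" by (simp add: tanh_map_def)

context psetup begin

abbreviation "D \<equiv> tanh_domain R"
abbreviation "g \<equiv> tilde f"

lemma inD: "a \<in> D \<Longrightarrow> tanh_map a \<in> R" by (simp add: tanh_domain_def)

lemma pd1: assumes a: "a \<in> D"
  shows "pd l g a = (1 - tanh (a$l)^2) * fd (tanh_map a) l"
proof -
  have "pd l g a = (\<Sum>j\<in>UNIV. ((axis l 1 :: real^'r) $ j * (1 - tanh (a$j)^2)) * dderiv f (axis j 1) (tanh_map a))"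
    unfolding pd_def tilde_def by (rule dderiv_comp_tanh[OF d1[OF inD[OF a]]])
  also have "\<dots> = (1 - tanh (a$l)^2) * fd (tanh_map a) l"
  proof -
    have "(\<Sum>j\<in>UNIV. ((axis l 1 :: real^'r) $ j * (1 - tanh (a$j)^2)) * dderiv f (axis j 1) (tanh_map a))
        = (\<Sum>j\<in>UNIV. if j = l then (1 - tanh (a$l)^2) * dderiv f (axis l 1) (tanh_map a) else 0)"
      by (rule sum.cong) (auto simp: axis_real_nth)
    then show ?thesis by (simp add: fd_def)
  qed
  finally show ?thesis .
qed

lemma pd2: assumes a: "a \<in> D"
  shows "pd j (pd l g) a = (if j = l then - (2 * tanh (a$l) * (1 - tanh (a$l)^2)) else 0) * fd (tanh_map a) l
     + (1 - tanh (a$l)^2) * (1 - tanh (a$j)^2) * Am (tanh_map a) j l"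
proof -
  let ?S = "\<lambda>b::real^'r. 1 - tanh (b$l)^2"
  let ?G = "\<lambda>b. dderiv f (axis l 1) (tanh_map b)"
  have oD: "open D" by (rule open_tanh_domain[OF oR])
  have "pd j (pd l g) a = dderiv (\<lambda>b. ?S b * ?G b) (axis j 1) a"
    unfolding pd_def[of j]
    by (rule dderiv_cong[OF oD a]) (use pd1 in \<open>simp add: fd_def pd_def\<close>)
  have hS: "(?S has_derivative (\<lambda>v. v$l * - (2 * tanh (a$l) * (1 - tanh (a$l)^2)))) (at a)"
    by (rule DERIV_compose_FDERIV[OF DERIV_sech2 bounded_linear_imp_has_derivative[OF bounded_linear_vec_nth]])
  have dG: "?G differentiable (at a)"
    using differentiable_chain_at[OF tanh_map_differentiable d2[OF inD[OF a]]] by (simp add: o_def)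
  have dS: "?S differentiable (at a)" using hS unfolding differentiable_def by blast
  have eG: "dderiv ?G (axis j 1) a = (1 - tanh (a$j)^2) * Am (tanh_map a) j l"
  proof -
    have "dderiv ?G (axis j 1) a = (\<Sum>m\<in>UNIV. ((axis j 1 :: real^'r) $ m * (1 - tanh (a$m)^2)) * dderiv (dderiv f (axis l 1)) (axis m 1) (tanh_map a))"
      by (rule dderiv_comp_tanh[OF d2[OF inD[OF a]]])
    also have "\<dots> = (1 - tanh (a$j)^2) * Am (tanh_map a) j l"
    proof -
      have "(\<Sum>m\<in>UNIV. ((axis j 1 :: real^'r) $ m * (1 - tanh (a$m)^2)) * dderiv (dderiv f (axis l 1)) (axis m 1) (tanh_map a))
        = (\<Sum>m\<in>UNIV. if m = j then (1 - tanh (a$j)^2) * dderiv (dderiv f (axis l 1)) (axis j 1) (tanh_map a) else 0)"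
        by (rule sum.cong) (auto simp: axis_real_nth)
      then show ?thesis by (simp add: Am_def)
    qed
    finally show ?thesis .
  qed
  have eS: "dderiv ?S (axis j 1) a = (if j = l then - (2 * tanh (a$l) * (1 - tanh (a$l)^2)) else 0)"
    using dderiv_at[OF hS, of "axis j 1"] by (simp add: axis_real_nth)
  show ?thesis
    unfolding \<open>pd j (pd l g) a = _\<close> dderiv_mult[OF dS dG] eG eS
    by (simp add: fd_def algebra_simps)
qed

end

lemma sech2_pos: "0 < 1 - tanh (t::real) ^ 2"
proof -
  have "\<bar>tanh t\<bar> < 1" using tanh_real_bounds[of t] by auto
  then have "tanh t ^ 2 < 1" by (simp add: abs_square_less_1)
  then show ?thesis by simp
qed

context psetup begin

lemma M_eq: assumes a: "a \<in> D"
  shows "logconv_matrix g a j l = (1 - tanh (a$j)^2) * (1 - tanh (a$l)^2) * Km (tanh_map a) j l"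
proof -
  let ?x = "tanh_map a"
  have x: "?x \<in> R" by (rule inD[OF a])
  have im: "\<forall>k. Im (?x$k) = 0" by (simp add: tm_im)
  show ?thesis
  proof (cases "j = l")
    case False
    then show ?thesis using pd2[OF a, of j l] by (simp add: logconv_matrix_def Km_def algebra_simps)
  next
    case True
    show ?thesis
    proof (cases "a$j = 0")
      case z: True
      have B: "Bm ?x j j = Am ?x j j" by (rule fact_d2[OF x im]) (simp add: tm_re z)
      show ?thesis using pd2[OF a, of j j] True z B
        by (simp add: logconv_matrix_def diag_term_def Km_def)
    next
      case nz: False
      let ?t = "tanh (a$j)"
      have t0: "?t \<noteq> 0" using nz by simp
      have d1': "?t * Bm ?x j j = fd ?x j" using fact_d1[OF x im, of j] by (simp add: tm_re)
      have cd: "2 * coth (2 * a$j) = (1 + ?t^2) / ?t" by (rule coth_double[OF nz])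
      have "logconv_matrix g a j j = 2 * coth (2 * a$j) * ((1 - ?t^2) * fd ?x j)
          + (- (2 * ?t * (1 - ?t^2)) * fd ?x j + (1 - ?t^2) * (1 - ?t^2) * Am ?x j j)"
        using pd2[OF a, of j j] pd1[OF a, of j] nz by (simp add: logconv_matrix_def diag_term_def)
      also have "\<dots> = (1 + ?t^2) / ?t * ((1 - ?t^2) * (?t * Bm ?x j j))
          + (- (2 * ?t * (1 - ?t^2)) * (?t * Bm ?x j j) + (1 - ?t^2) * (1 - ?t^2) * Am ?x j j)"
        unfolding d1' by (simp add: cd mult.assoc)
      also have "\<dots> = (1 - ?t^2) * (1 - ?t^2) * (Am ?x j j + Bm ?x j j)"
        using t0 by (simp add: field_simps power2_eq_square)
      finally show ?thesis using True by (simp add: Km_def)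
    qed
  qed
qed

lemma quad_transfer: assumes a: "a \<in> D"
  shows "(\<Sum>j\<in>UNIV. \<Sum>l\<in>UNIV. logconv_matrix g a j l * v$j * v$l)
       = (\<Sum>j\<in>UNIV. \<Sum>l\<in>UNIV. Km (tanh_map a) j l * ((1 - tanh (a$j)^2) * v$j) * ((1 - tanh (a$l)^2) * v$l))"
  by (simp add: M_eq[OF a] algebra_simps)

lemma quad_nonneg:
  assumes a: "a \<in> D"
    and pos: "\<forall>v::real^'r. v \<noteq> 0 \<longrightarrow> (\<Sum>j\<in>UNIV. \<Sum>l\<in>UNIV. logconv_matrix g a j l * v$j * v$l) > 0"
  shows "(\<Sum>j\<in>UNIV. \<Sum>l\<in>UNIV. Km (tanh_map a) j l * y j * y l) \<ge> 0"
    and "y \<noteq> (\<lambda>k. 0) \<Longrightarrow> (\<Sum>j\<in>UNIV. \<Sum>l\<in>UNIV. Km (tanh_map a) j l * y j * y l) > 0"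
proof -
  define Y where "Y = (\<chi> k. y k / (1 - tanh (a$k)^2))"
  have s: "(1 - tanh (a$k)^2) * Y$k = y k" for k
    unfolding Y_def using sech2_pos[of "a$k"] by simp
  have eq: "(\<Sum>j\<in>UNIV. \<Sum>l\<in>UNIV. Km (tanh_map a) j l * y j * y l)
      = (\<Sum>j\<in>UNIV. \<Sum>l\<in>UNIV. logconv_matrix g a j l * Y$j * Y$l)"
    unfolding quad_transfer[OF a] s ..
  {
    assume "y \<noteq> (\<lambda>k. 0)"
    then obtain k where "y k \<noteq> 0" by auto
    have "Y \<noteq> 0"
    proof
      assume "Y = 0"
      then have "y k = 0" using s[of k] by simp
      with \<open>y k \<noteq> 0\<close> show False by simp
    qed
    then have "(\<Sum>j\<in>UNIV. \<Sum>l\<in>UNIV. logconv_matrix g a j l * Y$j * Y$l) > 0" using pos by blast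
    then show "(\<Sum>j\<in>UNIV. \<Sum>l\<in>UNIV. Km (tanh_map a) j l * y j * y l) > 0" unfolding eq .
  }
  show "(\<Sum>j\<in>UNIV. \<Sum>l\<in>UNIV. Km (tanh_map a) j l * y j * y l) \<ge> 0"
  proof (cases "Y = 0")
    case True then show ?thesis unfolding eq by simp
  next
    case False
    then have "(\<Sum>j\<in>UNIV. \<Sum>l\<in>UNIV. logconv_matrix g a j l * Y$j * Y$l) > 0" using pos by blast
    then show ?thesis unfolding eq by simp
  qed
qed

end

lemma reflect_tanh: "tanh_map (reflect j a) = torus_act (\<lambda>k. if k = j then pi else 0) (tanh_map a)"
  by (auto simp: vec_eq_iff reflect_def torus_act_def tanh_map_def)

lemma polar: "cis (- Arg c) * c = complex_of_real (cmod c)"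
proof -
  have "c = rcis (cmod c) (Arg c)" by (simp add: rcis_cmod_Arg)
  then have "cis (- Arg c) * c = cis (- Arg c) * (complex_of_real (cmod c) * cis (Arg c))"
    by (metis rcis_def)
  also have "\<dots> = complex_of_real (cmod c) * (cis (- Arg c) * cis (Arg c))" by (simp add: mult.left_commute)
  also have "\<dots> = complex_of_real (cmod c)" by (simp add: cis_mult)
  finally show ?thesis .
qed

theorem proposition4p1:
  fixes R :: "(complex^'r::finite) set" and f :: "complex^'r \<Rightarrow> real"
  assumes "reinhardt_domain R"
    and "smooth_on R f"
    and "T_invariant_fun R f"
  shows "strictly_psh_on R f \<longleftrightarrow> LogConv_inf_plus_Z2 (tanh_domain R) (tilde f)"
proof -
  have oR: "open R" and Rsub: "R \<subseteq> unit_polydisc" and invR: "T_invariant_set R"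
    using assms(1) unfolding reinhardt_domain_def by auto
  interpret P: psetup R f using oR invR assms(2,3) by unfold_locales
  have tl: "tilde f = (\<lambda>a. f (tanh_map a))" by (simp add: tilde_def)
  show ?thesis
  proof
    assume psh: "strictly_psh_on R f"
    have sm: "smooth_on (tanh_domain R) (tilde f)"
      unfolding smooth_on_iff tl using open_tanh_domain[OF oR] comp_smooth[OF oR] assms(2) by blast
    have rf: "\<forall>a\<in>tanh_domain R. \<forall>j. reflect j a \<in> tanh_domain R \<and> tilde f (reflect j a) = tilde f a"
    proof (intro ballI allI)
      fix a j assume a: "a \<in> tanh_domain R"
      then have x: "tanh_map a \<in> R" by (simp add: tanh_domain_def)
      have r1: "tanh_map (reflect j a) \<in> R" unfolding reflect_tanh by (rule P.torusR[OF x])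
      have r2: "f (tanh_map (reflect j a)) = f (tanh_map a)"
        using assms(3) x unfolding T_invariant_fun_def reflect_tanh by blast
      show "reflect j a \<in> tanh_domain R \<and> tilde f (reflect j a) = tilde f a"
        using r1 r2 unfolding tanh_domain_def tilde_def by simp
    qed
    have pos: "\<forall>H\<in>tanh_domain R. \<forall>v::real^'r. v \<noteq> 0 \<longrightarrow>
          (\<Sum>j\<in>UNIV. \<Sum>l\<in>UNIV. logconv_matrix (tilde f) H j l * v$j * v$l) > 0"
    proof (intro ballI allI impI)
      fix a and v :: "real^'r" assume a: "a \<in> tanh_domain R" and v: "v \<noteq> 0"
      let ?x = "tanh_map a"
      have x: "?x \<in> R" using a by (simp add: tanh_domain_def)
      have im: "\<forall>k. Im (?x$k) = 0" by (simp add: tm_im)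
      define w where "w = (\<chi> k. complex_of_real ((1 - tanh (a$k)^2) * v$k))"
      have "w \<noteq> 0"
      proof
        assume "w = 0"
        then have "w$k = 0" for k by simp
        then have "(1 - tanh (a$k)^2) * v$k = 0" for k unfolding w_def by (simp only: vec_lambda_beta of_real_eq_0_iff)
        then have "v$k = 0" for k using sech2_pos[of "a$k"] by (metis less_irrefl mult_eq_0_iff)
        then show False using v by (simp add: vec_eq_iff)
      qed
      then have "0 < Re (\<Sum>j\<in>UNIV. \<Sum>l\<in>UNIV. levi f j l ?x * w$j * cnj (w$l))"
        using psh x unfolding strictly_psh_on_def by blast
      also have "\<dots> = P.Pz ?x w / 4" using P.LS_Pz[OF x] unfolding P.LS_def .
      also have "\<dots> = (\<Sum>j\<in>UNIV. \<Sum>l\<in>UNIV. logconv_matrix (tilde f) a j l * v$j * v$l) / 4"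
        unfolding P.Pz_real[OF x im] P.quad_transfer[OF a] w_def by (simp add: mult.assoc)
      finally show "(\<Sum>j\<in>UNIV. \<Sum>l\<in>UNIV. logconv_matrix (tilde f) a j l * v$j * v$l) > 0" by simp
    qed
    show "LogConv_inf_plus_Z2 (tanh_domain R) (tilde f)"
      unfolding LogConv_inf_plus_Z2_def using sm rf pos by blast
  next
    assume LC: "LogConv_inf_plus_Z2 (tanh_domain R) (tilde f)"
    then have pos: "\<forall>H\<in>tanh_domain R. \<forall>v::real^'r. v \<noteq> 0 \<longrightarrow>
          (\<Sum>j\<in>UNIV. \<Sum>l\<in>UNIV. logconv_matrix (tilde f) H j l * v$j * v$l) > 0"
      unfolding LogConv_inf_plus_Z2_def by blast
    show "strictly_psh_on R f"
      unfolding strictly_psh_on_def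
    proof (intro ballI allI impI)
      fix z and w :: "complex^'r" assume z: "z \<in> R" and w: "w \<noteq> 0"
      define \<theta> where "\<theta> = (\<lambda>k. Arg (z$k))"
      define x where "x = torus_act (\<lambda>k. - \<theta> k) z"
      define w' where "w' = torus_act (\<lambda>k. - \<theta> k) w"
      have x: "x \<in> R" unfolding x_def by (rule P.torusR[OF z])
      have xk: "x$k = complex_of_real (cmod (z$k))" for k
        unfolding x_def \<theta>_def torus_act_def by (simp add: polar)
      have im: "\<forall>k. Im (x$k) = 0" by (simp add: xk)
      have zx: "z = torus_act \<theta> x" unfolding x_def by (simp add: torus_neg')
      have ww: "w = torus_act \<theta> w'" unfolding w'_def by (simp add: torus_neg')
      have w'0: "w' \<noteq> 0"
      proof
        assume "w' = 0"
        then have "w = torus_act \<theta> 0" using ww by simp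
        also have "\<dots> = 0" using linear_0[OF linear_torus] by blast
        finally show False using w by simp
      qed
      define a where "a = (\<chi> k. artanh (cmod (z$k)))"
      have zlt: "cmod (z$k) < 1" for k using Rsub z unfolding unit_polydisc_def by blast
      have ax: "tanh_map a = x"
      proof -
        have "tanh (artanh (cmod (z$k))) = cmod (z$k)" for k
          by (rule tanh_artanh) (use zlt[of k] norm_ge_zero[of "z$k"] in linarith)+
        then show ?thesis unfolding a_def tanh_map_def by (simp add: vec_eq_iff xk)
      qed
      have a: "a \<in> tanh_domain R" unfolding tanh_domain_def using ax x by simp
      have "Re (\<Sum>j\<in>UNIV. \<Sum>l\<in>UNIV. levi f j l z * w$j * cnj (w$l)) = P.Pz z w / 4"
        using P.LS_Pz[OF z] unfolding P.LS_def .
      also have "P.Pz z w = P.Pz x w'" unfolding zx ww by (rule P.Pz_inv[OF x])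
      also have "\<dots> = (\<Sum>j\<in>UNIV. \<Sum>l\<in>UNIV. P.Km x j l * (\<lambda>k. Re (w'$k)) j * (\<lambda>k. Re (w'$k)) l)
                   + (\<Sum>j\<in>UNIV. \<Sum>l\<in>UNIV. P.Km x j l * (\<lambda>k. Im (w'$k)) j * (\<lambda>k. Im (w'$k)) l)"
        unfolding P.Pz_real[OF x im] by (simp add: sum.distrib[symmetric] algebra_simps)
      finally have eq: "Re (\<Sum>j\<in>UNIV. \<Sum>l\<in>UNIV. levi f j l z * w$j * cnj (w$l)) = (
                     (\<Sum>j\<in>UNIV. \<Sum>l\<in>UNIV. P.Km x j l * (\<lambda>k. Re (w'$k)) j * (\<lambda>k. Re (w'$k)) l)
                   + (\<Sum>j\<in>UNIV. \<Sum>l\<in>UNIV. P.Km x j l * (\<lambda>k. Im (w'$k)) j * (\<lambda>k. Im (w'$k)) l)) / 4" .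
      have pa: "\<forall>v::real^'r. v \<noteq> 0 \<longrightarrow> (\<Sum>j\<in>UNIV. \<Sum>l\<in>UNIV. logconv_matrix (tilde f) a j l * v$j * v$l) > 0"
        using pos a by blast
      note q1 = P.quad_nonneg(1)[OF a pa, unfolded ax]
      note q2 = P.quad_nonneg(2)[OF a pa, unfolded ax]
      have "(\<lambda>k. Re (w'$k)) \<noteq> (\<lambda>k. 0) \<or> (\<lambda>k. Im (w'$k)) \<noteq> (\<lambda>k. 0)"
        using w'0 by (auto simp: vec_eq_iff complex_eq_iff fun_eq_iff)
      then show "0 < Re (\<Sum>j\<in>UNIV. \<Sum>l\<in>UNIV. levi f j l z * w$j * cnj (w$l))"
        unfolding eq using q1[of "\<lambda>k. Re (w'$k)"] q1[of "\<lambda>k. Im (w'$k)"] q2[of "\<lambda>k. Re (w'$k)"] q2[of "\<lambda>k. Im (w'$k)"]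
        by auto
    qed
  qed
qed


end
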